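(* There is $p=O(\log n)$ such that $D^{p}(\textsc{IndSub}(\text{co-}P_3))=\tilde O(n)$.
   Context: $\text{co-}P_3$ is the complement of the path on three vertices (one edge plus an isolated vertex). Insertion-only streaming model: the edges of an $n$-vertex undirected input graph $G$ arrive as a stream in arbitrary order; the algorithm knows $n$, makes $p$ passes, and has $S$ bits of memory. $\textsc{IndSub}(H)$: decide whether $G$ contains $H$ as an induced subgraph and if so output the vertex set of a copy. $D^p(\Pi)$ is the minimum space of a deterministic $p$-pass streaming algorithm solving $\Pi$. $\tilde O$ hides polylogarithmic factors in $n$. *)

theory Defs
  imports Main "HOL-Library.Landau_Symbols"
begin

text \<open>Streams: an n-vertex simple undirected graph on vertex set {0..<n} is given as a
list of its edges (2-element vertex sets), each edge exactly once, in arbitrary order.\<close>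

definition valid_stream :: "nat \<Rightarrow> nat set list \<Rightarrow> bool" where
  "valid_stream n xs \<longleftrightarrow> distinct xs \<and>
     (\<forall>e\<in>set xs. \<exists>u v. u \<noteq> v \<and> u < n \<and> v < n \<and> e = {u, v})"

text \<open>T is the vertex set of an induced copy of co-P3 (one edge plus an isolated vertex)
in the graph with edge set E.\<close>

definition is_induced_coP3 :: "nat \<Rightarrow> nat set set \<Rightarrow> nat set \<Rightarrow> bool" where
  "is_induced_coP3 n E T \<longleftrightarrow> (\<exists>a b c. a < n \<and> b < n \<and> c < n \<and>
      a \<noteq> b \<and> a \<noteq> c \<and> b \<noteq> c \<and>
      {a, b} \<in> E \<and> {a, c} \<notin> E \<and> {b, c} \<notin> E \<and> T = {a, b, c})"

text \<open>A deterministic p-pass streaming algorithm with memory states = bit strings.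
  init: initial memory; step i s e: update in pass i on reading edge e;
  endpass i s: processing at the end of pass i; out: final output.\<close>

fun run_passes :: "(nat \<Rightarrow> 's \<Rightarrow> 'e \<Rightarrow> 's) \<Rightarrow> (nat \<Rightarrow> 's \<Rightarrow> 's) \<Rightarrow> 'e list \<Rightarrow> nat \<Rightarrow> 's \<Rightarrow> 's" where
  "run_passes step endpass xs 0 s = s"
| "run_passes step endpass xs (Suc k) s =
     endpass k (fold (\<lambda>e t. step k t e) xs (run_passes step endpass xs k s))"

definition uses_space :: "nat \<Rightarrow> bool list \<Rightarrow> (nat \<Rightarrow> bool list \<Rightarrow> nat set \<Rightarrow> bool list)
     \<Rightarrow> (nat \<Rightarrow> bool list \<Rightarrow> bool list) \<Rightarrow> bool" where
  "uses_space S init step endpass \<longleftrightarrow> length init = S \<and>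
     (\<forall>i s e. length s = S \<longrightarrow> length (step i s e) = S) \<and>
     (\<forall>i s. length s = S \<longrightarrow> length (endpass i s) = S)"

definition solves_IndSub_coP3 :: "nat \<Rightarrow> nat \<Rightarrow> bool list \<Rightarrow> (nat \<Rightarrow> bool list \<Rightarrow> nat set \<Rightarrow> bool list)
     \<Rightarrow> (nat \<Rightarrow> bool list \<Rightarrow> bool list) \<Rightarrow> (bool list \<Rightarrow> nat set option) \<Rightarrow> bool" where
  "solves_IndSub_coP3 n p init step endpass out \<longleftrightarrow>
     (\<forall>xs. valid_stream n xs \<longrightarrow>
        (case out (run_passes step endpass xs p init) of
           None \<Rightarrow> \<not> (\<exists>T. is_induced_coP3 n (set xs) T)
         | Some T \<Rightarrow> is_induced_coP3 n (set xs) T))"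

definition det_stream_alg_IndSub_coP3 :: "nat \<Rightarrow> nat \<Rightarrow> nat \<Rightarrow> bool" where
  "det_stream_alg_IndSub_coP3 n p S \<longleftrightarrow>
     (\<exists>init step endpass out. uses_space S init step endpass \<and>
        solves_IndSub_coP3 n p init step endpass out)"

end

theory Submission
  imports Defs "HOL-Library.Log_Nat" "HOL-Real_Asymp.Real_Asymp"
begin

definition bits :: "nat \<Rightarrow> nat \<Rightarrow> bool list" where
  "bits b x = map (bit x) [0..<b]"
definition from_bits :: "bool list \<Rightarrow> nat" where
  "from_bits bs = horner_sum of_bool 2 bs"

lemma length_bits[simp]: "length (bits b x) = b" by (simp add: bits_def)

lemma from_bits_bits: "x < 2 ^ b \<Longrightarrow> from_bits (bits b x) = x"
  by (simp add: bits_def from_bits_def horner_sum_bit_eq_take_bit take_bit_nat_eq_self)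

lemma chunk_concat:
  "(\<forall>x\<in>set cs. length (f x) = b) \<Longrightarrow> j < length cs \<Longrightarrow>
   take b (drop (j*b) (concat (map f cs) @ ys)) = f (cs ! j)"
proof (induction cs arbitrary: j)
  case Nil then show ?case by simp
next
  case (Cons c cs)
  show ?case
  proof (cases j)
    case 0 then show ?thesis using Cons.prems by simp
  next
    case (Suc j')
    have "drop (j*b) (concat (map f (c#cs)) @ ys) = drop (j'*b) (concat (map f cs) @ ys)"
      using Cons.prems Suc by (simp add: drop_append)
    then show ?thesis using Cons Suc by simp
  qed
qed

definition enc_cells :: "nat \<Rightarrow> nat \<Rightarrow> nat list \<Rightarrow> bool list" where
  "enc_cells S b cs = take S (concat (map (bits b) cs) @ replicate S False)"

lemma length_enc_cells[simp]: "length (enc_cells S b cs) = S"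
  by (simp add: enc_cells_def)

definition cell :: "nat \<Rightarrow> bool list \<Rightarrow> nat \<Rightarrow> nat" where
  "cell b bs j = from_bits (take b (drop (j*b) bs))"

lemma length_concat_bits: "length (concat (map (bits b) cs)) = length cs * b"
  by (induction cs) auto

lemma cell_enc:
  assumes "length cs * b = S" "j < length cs" "\<forall>x\<in>set cs. x < 2 ^ b"
  shows "cell b (enc_cells S b cs) j = cs ! j"
proof -
  have "enc_cells S b cs = concat (map (bits b) cs)"
    using assms(1) by (simp add: enc_cells_def length_concat_bits)
  then have "take b (drop (j*b) (enc_cells S b cs)) = bits b (cs ! j)"
    using chunk_concat[of cs "bits b" b j "[]"] assms by simp
  then show ?thesis using assms by (simp add: cell_def from_bits_bits)
qed

lemma sim_fold:
  assumes "\<And>s. I s \<Longrightarrow> dec (enc s) = s" "\<And>s e. I s \<Longrightarrow> I (f s e)" "I s"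
  shows "fold (\<lambda>e t. enc (f (dec t) e)) xs (enc s) = enc (fold (\<lambda>e t. f t e) xs s) \<and>
         I (fold (\<lambda>e t. f t e) xs s)"
  using assms(3)
proof (induction xs arbitrary: s)
  case Nil then show ?case by simp
next
  case (Cons x xs)
  have "enc (f (dec (enc s)) x) = enc (f s x)" using assms(1) Cons.prems by simp
  then show ?case using Cons.IH[of "f s x"] assms(2) Cons.prems by simp
qed

lemma sim_run:
  assumes "\<And>s. I s \<Longrightarrow> dec (enc s) = s" "\<And>i s e. I s \<Longrightarrow> I (f i s e)"
    "\<And>i s. I s \<Longrightarrow> I (g i s)" "I s"
  shows "run_passes (\<lambda>i t e. enc (f i (dec t) e)) (\<lambda>i t. enc (g i (dec t))) xs k (enc s)
       = enc (run_passes f g xs k s) \<and> I (run_passes f g xs k s)"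
proof (induction k)
  case 0 then show ?case using assms by simp
next
  case (Suc k)
  let ?r = "run_passes f g xs k s"
  have F: "fold (\<lambda>e t. enc (f k (dec t) e)) xs (enc ?r) = enc (fold (\<lambda>e t. f k t e) xs ?r) \<and>
         I (fold (\<lambda>e t. f k t e) xs ?r)"
    using sim_fold[of I dec enc "f k" ?r xs] assms Suc by blast
  show ?case using Suc F assms by simp
qed

datatype st = St (lo: "nat list") (cnt: "nat list") (nbr: "nat list") (fl: nat) (xa: nat) (xb: nat)

definition bb :: "nat \<Rightarrow> nat" where "bb n = floorlog 2 (n+2)"

lemma bb_pow: "n + 2 < 2 ^ bb n"
  using floorlog_bounds[of "n+2" 2] by (simp add: bb_def)

definition incr :: "nat \<Rightarrow> (nat \<Rightarrow> nat set \<Rightarrow> bool) \<Rightarrow> nat set \<Rightarrow> nat list \<Rightarrow> nat list" where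
  "incr n Q e c = map (\<lambda>v. if Q v e then min (c!v+1) (n+2) else c!v) [0..<n]"

definition tv :: "nat \<Rightarrow> nat \<Rightarrow> nat list \<Rightarrow> nat \<Rightarrow> nat" where
  "tv n i l v = l ! v + 2 ^ (bb n - Suc i)"

definition Qbs :: "nat \<Rightarrow> nat \<Rightarrow> nat list \<Rightarrow> nat \<Rightarrow> nat set \<Rightarrow> bool" where
  "Qbs n i l v e = (\<exists>w < tv n i l v. e = {v, w})"

definition Qdeg :: "nat \<Rightarrow> nat set \<Rightarrow> bool" where
  "Qdeg v e = (\<exists>w. e = {v, w})"

definition badc :: "nat \<Rightarrow> nat list \<Rightarrow> nat set \<Rightarrow> bool" where
  "badc n l e = (Min e < n \<and> Max e < n \<and> l ! Min e = l ! Max e)"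

definition bstep :: "nat \<Rightarrow> nat list \<Rightarrow> nat set \<Rightarrow> nat \<times> nat \<times> nat \<Rightarrow> nat \<times> nat \<times> nat" where
  "bstep n l e t = (if fst t = 0 \<and> badc n l e then (1, Min e, Max e) else t)"

definition nstep :: "nat \<Rightarrow> nat \<Rightarrow> nat set \<Rightarrow> nat list \<Rightarrow> nat list" where
  "nstep n x e c = map (\<lambda>w. if e = {x, w} then 1 else c ! w) [0..<n]"

definition astep :: "nat \<Rightarrow> nat \<Rightarrow> st \<Rightarrow> nat set \<Rightarrow> st" where
  "astep n i s e =
    (if i < bb n then St (lo s) (incr n (Qbs n i (lo s)) e (cnt s)) (nbr s) (fl s) (xa s) (xb s)
     else if i = bb n then
       (case bstep n (lo s) e (fl s, xa s, xb s) of (f, a, b) \<Rightarrow>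
         St (lo s) (incr n Qdeg e (cnt s)) (nbr s) f a b)
     else if i = Suc (bb n) then St (lo s) (cnt s) (nstep n (xa s) e (nbr s)) (fl s) (xa s) (xb s)
     else s)"

definition csize :: "nat list \<Rightarrow> nat \<Rightarrow> nat" where
  "csize l c = length (filter (\<lambda>w. w = c) l)"

definition aend :: "nat \<Rightarrow> nat \<Rightarrow> st \<Rightarrow> st" where
  "aend n i s =
    (if i < bb n then
       St (map (\<lambda>v. if cnt s ! v < tv n i (lo s) v then lo s ! v else min (tv n i (lo s) v) (n+2)) [0..<n])
          (replicate n 0) (nbr s) (fl s) (xa s) (xb s)
     else if i = bb n \<and> fl s = 0 then
       (case find (\<lambda>v. cnt s ! v + csize (lo s) (lo s ! v) \<noteq> n) [0..<n] of
          None \<Rightarrow> s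
        | Some v \<Rightarrow> St (lo s) (cnt s) (nbr s) 2 v (xb s))
     else s)"

definition ainit :: "nat \<Rightarrow> st" where
  "ainit n = St (replicate n 0) (replicate n 0) (replicate n 0) 0 0 0"

definition aout :: "nat \<Rightarrow> st \<Rightarrow> nat set option" where
  "aout n s =
    (if fl s = 1 then Some {xa s, xb s, lo s ! xa s}
     else if fl s = 2 then
       (let v = xa s;
            w = (case find (\<lambda>w. nbr s ! w = 0 \<and> lo s ! w \<noteq> lo s ! v) [0..<n] of Some w \<Rightarrow> w | None \<Rightarrow> 0)
        in if lo s ! w < lo s ! v then Some {v, lo s ! w, w} else Some {v, lo s ! v, w})
     else None)"

definition Inv :: "nat \<Rightarrow> st \<Rightarrow> bool" where
  "Inv n s \<longleftrightarrow> length (lo s) = n \<and> length (cnt s) = n \<and> length (nbr s) = n \<and>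
     (\<forall>x\<in>set (lo s). x \<le> n+2) \<and> (\<forall>x\<in>set (cnt s). x \<le> n+2) \<and> (\<forall>x\<in>set (nbr s). x \<le> n+2) \<and>
     fl s \<le> n+2 \<and> xa s \<le> n+2 \<and> xb s \<le> n+2"

definition cells :: "st \<Rightarrow> nat list" where
  "cells s = lo s @ cnt s @ nbr s @ [fl s, xa s, xb s]"

definition SS :: "nat \<Rightarrow> nat" where "SS n = (3*n+3) * bb n"

definition enc :: "nat \<Rightarrow> st \<Rightarrow> bool list" where
  "enc n s = enc_cells (SS n) (bb n) (cells s)"

definition dec :: "nat \<Rightarrow> bool list \<Rightarrow> st" where
  "dec n bs = (let c = cell (bb n) bs in
     St (map c [0..<n]) (map (\<lambda>i. c (n+i)) [0..<n]) (map (\<lambda>i. c (2*n+i)) [0..<n])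
        (c (3*n)) (c (3*n+1)) (c (3*n+2)))"

lemma dec_enc: assumes "Inv n s" shows "dec n (enc n s) = s"
proof -
  let ?cs = "cells s"
  have len: "length ?cs = 3*n+3" using assms by (simp add: Inv_def cells_def)
  have bnd: "\<forall>x\<in>set ?cs. x < 2 ^ bb n" using assms bb_pow[of n]
    by (auto simp: Inv_def cells_def)
  have c: "\<And>j. j < 3*n+3 \<Longrightarrow> cell (bb n) (enc n s) j = ?cs ! j"
    using cell_enc[of ?cs "bb n" "SS n"] len bnd by (simp add: enc_def SS_def)
  have l1: "map (\<lambda>j. cell (bb n) (enc n s) j) [0..<n] = lo s"
    using assms by (intro nth_equalityI) (auto simp: c Inv_def cells_def nth_append)
  have l2: "map (\<lambda>i. cell (bb n) (enc n s) (n+i)) [0..<n] = cnt s"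
    using assms by (intro nth_equalityI) (auto simp: c Inv_def cells_def nth_append)
  have l3: "map (\<lambda>i. cell (bb n) (enc n s) (2*n+i)) [0..<n] = nbr s"
    using assms by (intro nth_equalityI) (auto simp: c Inv_def cells_def nth_append)
  have l4: "cell (bb n) (enc n s) (3*n) = fl s" "cell (bb n) (enc n s) (3*n+1) = xa s"
     "cell (bb n) (enc n s) (3*n+2) = xb s"
    using assms by (auto simp: c Inv_def cells_def nth_append)
  show ?thesis using l1 l2 l3 l4 by (simp add: dec_def)
qed

lemma length_incr[simp]: "length (incr n Q e c) = n" by (simp add: incr_def)
lemma length_nstep[simp]: "length (nstep n x e c) = n" by (simp add: nstep_def)

lemma Inv_astep: "Inv n s \<Longrightarrow> Inv n (astep n i s e)"
  by (auto simp: astep_def Inv_def incr_def nstep_def bstep_def badc_def split: prod.splits)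

lemma Inv_aend: "Inv n s \<Longrightarrow> Inv n (aend n i s)"
  by (auto simp: aend_def Inv_def split: option.splits dest: find_Some_iff[THEN iffD1])

lemma Inv_init: "Inv n (ainit n)" by (simp add: ainit_def Inv_def)

lemma fold_incr:
  "length c = n \<Longrightarrow> v < n \<Longrightarrow> c!v \<le> n+2 \<Longrightarrow>
   fold (incr n Q) ys c ! v = min (c!v + length (filter (Q v) ys)) (n+2)"
proof (induction ys arbitrary: c)
  case Nil then show ?case by simp
next
  case (Cons y ys)
  have e: "incr n Q y c ! v = min (c!v + (if Q v y then 1 else 0)) (n+2)"
    using Cons.prems by (auto simp: incr_def)
  have "incr n Q y c ! v \<le> n+2" "length (incr n Q y c) = n" using Cons.prems by (auto simp: incr_def)
  then have "fold (incr n Q) ys (incr n Q y c) ! v = min (incr n Q y c ! v + length (filter (Q v) ys)) (n+2)"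
    using Cons by blast
  moreover have "fold (incr n Q) (y#ys) c = fold (incr n Q) ys (incr n Q y c)" by simp
  ultimately show ?case unfolding e by (auto simp del: fold_simps)
qed

lemma length_fold_incr: "length c = n \<Longrightarrow> length (fold (incr n Q) ys c) = n"
  by (induction ys arbitrary: c) auto

lemma fold_nstep:
  "length c = n \<Longrightarrow> w < n \<Longrightarrow>
   fold (nstep n x) ys c ! w = (if {x, w} \<in> set ys then 1 else c ! w)"
proof (induction ys arbitrary: c)
  case Nil then show ?case by simp
next
  case (Cons y ys)
  have "length (nstep n x y c) = n" by simp
  then show ?case using Cons by (auto simp: nstep_def)
qed

lemma bstep_1: "fst t = 1 \<Longrightarrow> fold (bstep n l) ys t = t"
  by (induction ys) (auto simp: bstep_def)

lemma fold_bstep: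
  "(fold (bstep n l) ys (0, a, b) = (0, a, b) \<and> (\<forall>e\<in>set ys. \<not> badc n l e)) \<or>
   (\<exists>e\<in>set ys. badc n l e \<and> fold (bstep n l) ys (0, a, b) = (1, Min e, Max e))"
proof (induction ys arbitrary: a b)
  case Nil then show ?case by simp
next
  case (Cons y ys)
  show ?case
  proof (cases "badc n l y")
    case True
    then have "fold (bstep n l) (y#ys) (0,a,b) = (1, Min y, Max y)"
      using bstep_1 by (simp add: bstep_def)
    then show ?thesis using True by auto
  next
    case False
    then have "fold (bstep n l) (y#ys) (0,a,b) = fold (bstep n l) ys (0,a,b)"
      by (simp add: bstep_def)
    then show ?thesis using Cons.IH[of a b] False by auto
  qed
qed

locale vs =
  fixes n :: nat and xs :: "nat set list"
  assumes valid: "valid_stream n xs"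
begin

definition adj :: "nat \<Rightarrow> nat \<Rightarrow> bool" where "adj u w \<longleftrightarrow> {u, w} \<in> set xs"
definition ell :: "nat \<Rightarrow> nat" where "ell v = (LEAST w. \<not> adj v w)"

lemma dist: "distinct xs" using valid by (simp add: valid_stream_def)

lemma edge_form: "e \<in> set xs \<Longrightarrow> \<exists>u v. u \<noteq> v \<and> u < n \<and> v < n \<and> e = {u, v}"
  using valid by (simp add: valid_stream_def)

lemma adj_props: "adj u w \<Longrightarrow> u \<noteq> w \<and> u < n \<and> w < n"
proof -
  assume "adj u w"
  then obtain a b where ab: "a \<noteq> b" "a < n" "b < n" "{u, w} = {a, b}"
    using edge_form unfolding adj_def by blast
  then show ?thesis by (auto simp: doubleton_eq_iff)
qed

lemma adj_sym: "adj u w = adj w u" by (simp add: adj_def insert_commute)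

lemma not_adj_self: "\<not> adj v v" using adj_props by blast

lemma ell_le: "ell v \<le> v"
  unfolding ell_def by (rule Least_le) (rule not_adj_self)

lemma ell_not: "\<not> adj v (ell v)"
  unfolding ell_def by (rule LeastI[where k=v]) (rule not_adj_self)

lemma ell_min: "w < ell v \<Longrightarrow> adj v w"
  unfolding ell_def using not_less_Least by blast

lemma count_nbrs:
  "length (filter (\<lambda>e. \<exists>w. R w \<and> e = {v, w}) xs) = card {w. R w \<and> adj v w}"
proof -
  have "length (filter (\<lambda>e. \<exists>w. R w \<and> e = {v, w}) xs) = card (set (filter (\<lambda>e. \<exists>w. R w \<and> e = {v, w}) xs))"
    by (rule distinct_card[symmetric]) (simp add: dist)
  also have "set (filter (\<lambda>e. \<exists>w. R w \<and> e = {v, w}) xs) = (\<lambda>w. {v, w}) ` {w. R w \<and> adj v w}"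
    by (auto simp: adj_def)
  also have "card \<dots> = card {w. R w \<and> adj v w}"
    by (rule card_image) (auto simp: inj_on_def doubleton_eq_iff)
  finally show ?thesis .
qed

lemma card_nbrs_le: "card {w. R w \<and> adj v w} \<le> n"
proof -
  have "{w. R w \<and> adj v w} \<subseteq> {..<n}" using adj_props by auto
  then have "card {w. R w \<and> adj v w} \<le> card {..<n}" by (rule card_mono[OF finite_lessThan])
  then show ?thesis by simp
qed

lemma card_lt_iff: "card {w. w < t \<and> adj v w} < t \<longleftrightarrow> ell v < t"
proof
  assume "ell v < t"
  then have "{w. w < t \<and> adj v w} \<subseteq> {..<t} - {ell v}" using ell_not by auto
  then have "card {w. w < t \<and> adj v w} \<le> card ({..<t} - {ell v})" by (intro card_mono) auto
  then show "card {w. w < t \<and> adj v w} < t" using \<open>ell v < t\<close> by simp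
next
  assume a: "card {w. w < t \<and> adj v w} < t"
  show "ell v < t"
  proof (rule ccontr)
    assume "\<not> ell v < t"
    then have "{w. w < t \<and> adj v w} = {..<t}" using ell_min by auto
    then show False using a by simp
  qed
qed

end

context vs begin

lemma coP3_iff: "is_induced_coP3 n (set xs) T \<longleftrightarrow> (\<exists>a b c. a < n \<and> b < n \<and> c < n \<and>
      a \<noteq> b \<and> a \<noteq> c \<and> b \<noteq> c \<and> adj a b \<and> \<not> adj a c \<and> \<not> adj b c \<and> T = {a, b, c})"
  by (simp add: is_induced_coP3_def adj_def)

lemma ell_lt: "v < n \<Longrightarrow> ell v < n" using ell_le[of v] by simp

lemma L1: assumes "adj a b" "ell a = ell b" shows "is_induced_coP3 n (set xs) {a, b, ell a}"
proof -
  have ab: "a \<noteq> b" "a < n" "b < n" using adj_props[OF assms(1)] by auto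
  have n1: "\<not> adj a (ell a)" "\<not> adj b (ell a)" using ell_not[of a] ell_not[of b] assms(2) by auto
  have "a \<noteq> ell a" using n1(2) assms(1) adj_sym by auto
  moreover have "b \<noteq> ell a" using n1(1) assms(1) by auto
  ultimately show ?thesis unfolding coP3_iff using ab n1 assms(1) ell_lt[of a]
    by (intro exI[of _ a] exI[of _ b] exI[of _ "ell a"]) auto
qed

definition NA :: "nat \<Rightarrow> nat set" where "NA v = {w. w < n \<and> \<not> adj v w}"
definition Cl :: "nat \<Rightarrow> nat set" where "Cl v = {w. w < n \<and> ell w = ell v}"
definition deg :: "nat \<Rightarrow> nat" where "deg v = card {w. adj v w}"

lemma card_NA: "card (NA v) + deg v = n"
proof -
  have sub: "{w. adj v w} \<subseteq> {..<n}" using adj_props by blast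
  have u: "{..<n} = NA v \<union> {w. adj v w}" using sub unfolding NA_def by blast
  have i: "NA v \<inter> {w. adj v w} = {}" unfolding NA_def by blast
  have f1: "finite {w. adj v w}" by (rule finite_subset[OF sub]) simp
  have f2: "finite (NA v)" by (simp add: NA_def)
  have "card {..<n} = card (NA v) + card {w. adj v w}"
    unfolding u by (rule card_Un_disjoint[OF f2 f1 i])
  then show ?thesis by (simp add: deg_def)
qed

lemma Cl_sub: assumes "\<forall>a b. adj a b \<longrightarrow> ell a \<noteq> ell b" shows "Cl v \<subseteq> NA v"
proof
  fix x assume "x \<in> Cl v"
  then have x: "x < n" "ell x = ell v" by (auto simp: Cl_def)
  have "\<not> adj v x"
  proof
    assume "adj v x"
    then have "ell v \<noteq> ell x" using assms by blast
    then show False using x by simp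
  qed
  then show "x \<in> NA v" using x by (simp add: NA_def)
qed

lemma L2: assumes nb: "\<forall>a b. adj a b \<longrightarrow> ell a \<noteq> ell b" and dg: "\<forall>v<n. deg v + card (Cl v) = n"
  shows "\<not> (\<exists>T. is_induced_coP3 n (set xs) T)"
proof
  have eq: "NA v = Cl v" if "v < n" for v
  proof -
    have "card (Cl v) = card (NA v)" using dg that card_NA[of v] by auto
    then show ?thesis using Cl_sub[OF nb, of v] by (intro card_subset_eq[symmetric]) (auto simp: NA_def)
  qed
  assume "\<exists>T. is_induced_coP3 n (set xs) T"
  then obtain a b c where abc: "a < n" "b < n" "c < n" "adj a b" "\<not> adj a c" "\<not> adj b c"
    unfolding coP3_iff by blast
  have "c \<in> NA a" "c \<in> NA b" using abc by (auto simp: NA_def)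
  then have "c \<in> Cl a" "c \<in> Cl b" using eq abc by auto
  then have "ell a = ell b" by (auto simp: Cl_def)
  then show False using nb abc by blast
qed

lemma L3: assumes nb: "\<forall>a b. adj a b \<longrightarrow> ell a \<noteq> ell b" and "v < n" "deg v + card (Cl v) \<noteq> n"
  shows "\<exists>w<n. \<not> adj v w \<and> ell w \<noteq> ell v"
proof (rule ccontr)
  assume "\<not> ?thesis"
  then have "NA v \<subseteq> Cl v" by (auto simp: NA_def Cl_def)
  then have "NA v = Cl v" using Cl_sub[OF nb, of v] by auto
  then show False using card_NA[of v] assms(3) by simp
qed

lemma L4: assumes "v < n" "w < n" "\<not> adj v w" "ell w \<noteq> ell v"
  shows "is_induced_coP3 n (set xs) (if ell w < ell v then {v, ell w, w} else {v, ell v, w})"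
proof (cases "ell w < ell v")
  case True
  have a1: "adj v (ell w)" using ell_min[OF True] .
  have a2: "\<not> adj (ell w) w" using ell_not[of w] adj_sym by auto
  have d: "v \<noteq> ell w" "v \<noteq> w" "ell w \<noteq> w" using a1 assms(3,4) adj_props[OF a1] by auto
  show ?thesis unfolding coP3_iff using True a1 a2 d assms ell_lt[of w]
    by (intro exI[of _ v] exI[of _ "ell w"] exI[of _ w]) auto
next
  case False
  then have gt: "ell v < ell w" using assms(4) by simp
  have nv: "ell v \<noteq> v"
  proof
    assume "ell v = v"
    have "\<not> adj w v" using assms(3) adj_sym by auto
    then have "ell w \<le> v" unfolding ell_def by (rule Least_le)
    then show False using gt \<open>ell v = v\<close> by simp
  qed
  have a1: "adj w (ell v)"
  proof (rule ccontr)
    assume "\<not> adj w (ell v)"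
    then have "ell w \<le> ell v" unfolding ell_def[of w] by (rule Least_le)
    then show False using gt by simp
  qed
  have a2: "\<not> adj (ell v) v" using ell_not[of v] adj_sym by auto
  have a3: "\<not> adj w v" using assms(3) adj_sym by auto
  have d: "w \<noteq> ell v" "w \<noteq> v" "ell v \<noteq> v" using a1 assms(3,4) adj_props[OF a1] nv by auto
  have "{v, ell v, w} = {w, ell v, v}" by auto
  then show ?thesis unfolding coP3_iff using False a1 a2 a3 d assms ell_lt[of v]
    by (intro exI[of _ w] exI[of _ "ell v"] exI[of _ v]) auto
qed

end

lemma find_SomeD': "find P xs = Some x \<Longrightarrow> P x \<and> x \<in> set xs"
  by (auto simp: find_Some_iff)

lemma len_filter_upt: "length (filter P [0..<n]) = card {w. w < n \<and> P w}"
proof -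
  have "length (filter P [0..<n]) = card (set (filter P [0..<n]))"
    by (rule distinct_card[symmetric]) simp
  also have "set (filter P [0..<n]) = {w. w < n \<and> P w}" by auto
  finally show ?thesis .
qed

lemma aend_big: "i > bb n \<Longrightarrow> aend n i s = s" by (simp add: aend_def)

context vs begin

abbreviation Z :: "nat list" where "Z \<equiv> replicate n 0"

lemma fold_bs: "r < bb n \<Longrightarrow>
  fold (\<lambda>e t. astep n r t e) ys (St l c nb f a b) = St l (fold (incr n (Qbs n r l)) ys c) nb f a b"
  by (induction ys arbitrary: c) (simp_all add: astep_def)

lemma fold_K: "fold (\<lambda>e t. astep n (bb n) t e) ys (St l c nb f a b) =
   (case fold (bstep n l) ys (f, a, b) of (f', a', b') \<Rightarrow> St l (fold (incr n Qdeg) ys c) nb f' a' b')"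
proof (induction ys arbitrary: c f a b)
  case Nil then show ?case by simp
next
  case (Cons y ys)
  obtain f1 a1 b1 where B: "bstep n l y (f, a, b) = (f1, a1, b1)" by (metis prod_cases3)
  have "astep n (bb n) (St l c nb f a b) y = St l (incr n Qdeg y c) nb f1 a1 b1"
    using B by (simp add: astep_def)
  then show ?case using Cons.IH[of "incr n Qdeg y c" f1 a1 b1] B by simp
qed

lemma fold_K1: "fold (\<lambda>e t. astep n (Suc (bb n)) t e) ys (St l c nb f a b) =
    St l c (fold (nstep n a) ys nb) f a b"
  by (induction ys arbitrary: nb) (simp_all add: astep_def)

definition BS :: "nat \<Rightarrow> nat list \<Rightarrow> bool" where
  "BS r l \<longleftrightarrow> length l = n \<and> (\<forall>v<n. l!v \<le> ell v \<and> ell v < l!v + 2^(bb n - r))"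

lemma round:
  assumes r: "r < bb n" and bs: "BS r l"
  shows "\<exists>l'. aend n r (fold (\<lambda>e t. astep n r t e) xs (St l Z Z 0 0 0)) = St l' Z Z 0 0 0 \<and> BS (Suc r) l'"
proof -
  let ?c = "fold (incr n (Qbs n r l)) xs Z"
  have cv: "?c ! v = card {w. w < tv n r l v \<and> adj v w}" if v: "v < n" for v
  proof -
    have "?c ! v = min (0 + length (filter (Qbs n r l v) xs)) (n+2)"
      using fold_incr[of Z n v Q xs] v by (simp add: fold_incr)
    also have "Qbs n r l v = (\<lambda>e. \<exists>w. w < tv n r l v \<and> e = {v, w})"
      by (simp add: Qbs_def fun_eq_iff)
    finally show ?thesis using count_nbrs[of "\<lambda>w. w < tv n r l v" v]
      card_nbrs_le[of "\<lambda>w. w < tv n r l v" v] by simp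
  qed
  define l' where "l' = map (\<lambda>v. if ?c ! v < tv n r l v then l ! v else min (tv n r l v) (n+2)) [0..<n]"
  have A: "aend n r (fold (\<lambda>e t. astep n r t e) xs (St l Z Z 0 0 0)) = St l' Z Z 0 0 0"
    using r by (simp add: fold_bs aend_def l'_def)
  have pw: "(2::nat)^(bb n - r) = 2^(bb n - Suc r) + 2^(bb n - Suc r)"
    using r by (metis Suc_diff_Suc mult_2 power_Suc)
  have len: "length l' = n" by (simp add: l'_def)
  have "\<forall>v<n. l' ! v \<le> ell v \<and> ell v < l' ! v + 2 ^ (bb n - Suc r)"
  proof (intro allI impI)
    fix v assume v: "v < n"
    have b: "l!v \<le> ell v" "ell v < l!v + 2^(bb n - r)" using bs v by (auto simp: BS_def)
    have t: "tv n r l v = l!v + 2^(bb n - Suc r)" by (simp add: tv_def)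
    show "l' ! v \<le> ell v \<and> ell v < l' ! v + 2 ^ (bb n - Suc r)"
    proof (cases "ell v < tv n r l v")
      case True
      then have "?c ! v < tv n r l v" using cv[OF v] card_lt_iff by simp
      then show ?thesis using True b v t by (simp add: l'_def)
    next
      case False
      then have "\<not> ?c ! v < tv n r l v" using cv[OF v] card_lt_iff by simp
      moreover have "tv n r l v \<le> n+2" using False ell_le[of v] v by simp
      ultimately have "l' ! v = tv n r l v" using v by (simp add: l'_def)
      then show ?thesis using False b t pw by simp
    qed
  qed
  then have "BS (Suc r) l'" using len by (simp add: BS_def)
  then show ?thesis using A by blast
qed

lemma run_bs: "r \<le> bb n \<Longrightarrow> \<exists>l. run_passes (astep n) (aend n) xs r (ainit n) = St l Z Z 0 0 0 \<and> BS r l"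
proof (induction r)
  case 0
  have "ell v < 2 ^ bb n" if "v < n" for v
    using ell_le[of v] bb_pow[of n] that by linarith
  then have "BS 0 Z" by (simp add: BS_def)
  then show ?case by (auto simp: ainit_def)
next
  case (Suc r)
  then obtain l where l: "run_passes (astep n) (aend n) xs r (ainit n) = St l Z Z 0 0 0" "BS r l" by auto
  then show ?case using round[of r l] Suc.prems by simp
qed

lemma run_K: "run_passes (astep n) (aend n) xs (bb n) (ainit n) = St (map ell [0..<n]) Z Z 0 0 0"
proof -
  obtain l where l: "run_passes (astep n) (aend n) xs (bb n) (ainit n) = St l Z Z 0 0 0" "BS (bb n) l"
    using run_bs by blast
  have "l = map ell [0..<n]"
  proof (rule nth_equalityI)
    show "length l = length (map ell [0..<n])" using l(2) by (simp add: BS_def)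
    fix i assume "i < length l"
    then show "l ! i = map ell [0..<n] ! i" using l(2) by (auto simp: BS_def)
  qed
  then show ?thesis using l by simp
qed

end

context vs begin

lemma edge_MinMax: assumes "e \<in> set xs"
  shows "e = {Min e, Max e}" "adj (Min e) (Max e)" "Min e < n" "Max e < n"
proof -
  obtain u v where uv: "u \<noteq> v" "u < n" "v < n" "e = {u, v}" using edge_form[OF assms] by blast
  have m: "Min e = min u v" "Max e = max u v" using uv(4) by auto
  show e: "e = {Min e, Max e}" using uv m by (auto simp: min_def max_def)
  show "adj (Min e) (Max e)" using assms e by (simp add: adj_def)
  show "Min e < n" "Max e < n" using uv m by auto
qed

theorem alg_correct:
  "case aout n (run_passes (astep n) (aend n) xs (bb n + 2) (ainit n)) of
     None \<Rightarrow> \<not> (\<exists>T. is_induced_coP3 n (set xs) T)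
   | Some T \<Rightarrow> is_induced_coP3 n (set xs) T"
proof -
  define L where "L = map ell [0..<n]"
  define D where "D = fold (incr n Qdeg) xs Z"
  have lenL: "length L = n" by (simp add: L_def)
  have Lv: "L ! v = ell v" if "v < n" for v using that by (simp add: L_def)
  have Dv: "D ! v = deg v" if "v < n" for v
  proof -
    have "D ! v = min (0 + length (filter (Qdeg v) xs)) (n+2)"
      unfolding D_def using fold_incr[of Z n v Qdeg xs] that by simp
    also have "Qdeg v = (\<lambda>e. \<exists>w. True \<and> e = {v, w})" by (simp add: Qdeg_def fun_eq_iff)
    finally show ?thesis using count_nbrs[of "\<lambda>w. True" v] card_nbrs_le[of "\<lambda>w. True" v]
      by (simp add: deg_def)
  qed
  have csz: "csize L (L ! v) = card (Cl v)" if "v < n" for v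
  proof -
    have "csize L (L ! v) = length (filter (\<lambda>w. ell w = ell v) [0..<n])"
      using that by (simp add: csize_def L_def filter_map comp_def)
    also have "\<dots> = card (Cl v)" by (simp add: len_filter_upt Cl_def)
    finally show ?thesis .
  qed
  have badc_iff: "badc n L e \<longleftrightarrow> ell (Min e) = ell (Max e)" if "e \<in> set xs" for e
    using edge_MinMax[OF that] by (simp add: badc_def Lv)
  have run: "run_passes (astep n) (aend n) xs (bb n + 2) (ainit n) =
     aend n (Suc (bb n)) (fold (\<lambda>e t. astep n (Suc (bb n)) t e) xs
       (aend n (bb n) (fold (\<lambda>e t. astep n (bb n) t e) xs (St L Z Z 0 0 0))))"
    by (simp add: run_K L_def)
  obtain f a b where fab: "fold (bstep n L) xs (0, 0, 0) = (f, a, b)" by (metis prod_cases3)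
  have s1: "fold (\<lambda>e t. astep n (bb n) t e) xs (St L Z Z 0 0 0) = St L D Z f a b"
    by (simp add: fold_K fab D_def)
  show ?thesis
  proof (cases "\<forall>e\<in>set xs. \<not> badc n L e")
    case False
    then obtain e where e: "e \<in> set xs" "badc n L e" "fold (bstep n L) xs (0, 0, 0) = (1, Min e, Max e)"
      using fold_bstep[of n L xs 0 0] by blast
    then have fab': "f = 1" "a = Min e" "b = Max e" using fab by auto
    have "aend n (bb n) (St L D Z f a b) = St L D Z f a b" using fab' by (simp add: aend_def)
    then have R: "run_passes (astep n) (aend n) xs (bb n + 2) (ainit n) = St L D (fold (nstep n a) xs Z) f a b"
      using run s1 by (simp add: fold_K1 aend_big)
    have "aout n (St L D (fold (nstep n a) xs Z) f a b) = Some {Min e, Max e, ell (Min e)}"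
      using fab' edge_MinMax[OF e(1)] by (simp add: aout_def Lv)
    then show ?thesis using R L1[of "Min e" "Max e"] edge_MinMax[OF e(1)] badc_iff[OF e(1)] e(2) by simp
  next
    case True
    then have f0: "f = 0" "a = 0" "b = 0" using fold_bstep[of n L xs 0 0] fab by auto
    have nb: "\<forall>u w. adj u w \<longrightarrow> ell u \<noteq> ell w"
    proof (intro allI impI)
      fix u w assume "adj u w"
      then have "{u, w} \<in> set xs" by (simp add: adj_def)
      then have "\<not> ell (Min {u, w}) = ell (Max {u, w})" using True badc_iff by blast
      then show "ell u \<noteq> ell w" by (cases "u \<le> w") (auto simp: min_def max_def)
    qed
    let ?P = "\<lambda>v. D ! v + csize L (L ! v) \<noteq> n"
    show ?thesis
    proof (cases "find ?P [0..<n]")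
      case None
      then have dg: "\<forall>v<n. deg v + card (Cl v) = n" using Dv csz by (auto simp: find_None_iff)
      have "aend n (bb n) (St L D Z f a b) = St L D Z f a b" using f0 None by (simp add: aend_def)
      then have R: "run_passes (astep n) (aend n) xs (bb n + 2) (ainit n) = St L D (fold (nstep n a) xs Z) f a b"
        using run s1 by (simp add: fold_K1 aend_big)
      show ?thesis using R f0 L2[OF nb dg] by (simp add: aout_def)
    next
      case (Some v)
      then have v: "v < n" "deg v + card (Cl v) \<noteq> n" using find_SomeD'[OF Some] Dv csz by auto
      have "aend n (bb n) (St L D Z f a b) = St L D Z 2 v b" using f0 Some by (simp add: aend_def)
      then have R: "run_passes (astep n) (aend n) xs (bb n + 2) (ainit n) = St L D (fold (nstep n v) xs Z) 2 v b"
        using run s1 by (simp add: fold_K1 aend_big)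
      define NB where "NB = fold (nstep n v) xs Z"
      have NBw: "NB ! w = (if adj v w then 1 else 0)" if "w < n" for w
        using fold_nstep[of Z n w v xs] that by (simp add: NB_def adj_def)
      let ?Q = "\<lambda>w. NB ! w = 0 \<and> L ! w \<noteq> L ! v"
      obtain w0 where w0: "w0 < n" "\<not> adj v w0" "ell w0 \<noteq> ell v" using L3[OF nb v] by blast
      have "find ?Q [0..<n] \<noteq> None" using w0 NBw Lv v by (auto simp: find_None_iff)
      then obtain w where w: "find ?Q [0..<n] = Some w" by blast
      then have w': "w < n" "\<not> adj v w" "ell w \<noteq> ell v" using find_SomeD'[OF w] NBw Lv v
        by (auto split: if_splits)
      have "aout n (St L D NB 2 v b) =
          (if ell w < ell v then Some {v, ell w, w} else Some {v, ell v, w})"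
        using w w' v by (simp add: aout_def Lv)
      then show ?thesis using R L4[OF v(1) w'] by (simp add: NB_def split: if_splits)
    qed
  qed
qed

end

lemma bb_real: "real (bb n) \<le> log 2 (real n + 2) + 1"
proof -
  have "real (bb n) = real (nat \<lfloor>log 2 (real (n+2))\<rfloor> + 1)" by (simp add: bb_def floorlog_def)
  also have "\<dots> \<le> log 2 (real n + 2) + 1"
  proof -
    have "log 2 (real n + 2) \<ge> 1" by simp
    then show ?thesis by (simp add: add.commute)
  qed
  finally show ?thesis .
qed

lemma p_bigo: "(\<lambda>n. real (bb n + 2)) \<in> O(\<lambda>n. ln (real n))"
proof -
  have 1: "(\<lambda>n. real (bb n + 2)) \<in> O(\<lambda>n::nat. log 2 (real n + 2) + 3)"
    apply (rule bigoI[where c=1])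
    apply (auto intro!: always_eventually)
    subgoal for x using bb_real[of x] by linarith
    done
  have 2: "(\<lambda>n::nat. log 2 (real n + 2) + 3) \<in> O(\<lambda>n. ln (real n))" by real_asymp
  show ?thesis using landau_o.big_trans[OF 1 2] .
qed

lemma S_bigo: "(\<lambda>n. real (SS n)) \<in> O(\<lambda>n. real n * ln (real n) ^ 1)"
proof -
  have 1: "(\<lambda>n. real (SS n)) \<in> O(\<lambda>n::nat. (3 * real n + 3) * (log 2 (real n + 2) + 1))"
    apply (rule bigoI[where c=1])
    using bb_real by (auto simp: SS_def intro!: always_eventually mult_left_mono)
  have 2: "(\<lambda>n::nat. (3 * real n + 3) * (log 2 (real n + 2) + 1)) \<in> O(\<lambda>n. real n * ln (real n) ^ 1)"
    by real_asymp
  show ?thesis using landau_o.big_trans[OF 1 2] .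
qed

lemma alg_exists: "det_stream_alg_IndSub_coP3 n (bb n + 2) (SS n)"
proof -
  let ?init = "enc n (ainit n)"
  let ?step = "\<lambda>i t e. enc n (astep n i (dec n t) e)"
  let ?endp = "\<lambda>i t. enc n (aend n i (dec n t))"
  let ?out = "\<lambda>t. aout n (dec n t)"
  have us: "uses_space (SS n) ?init ?step ?endp"
    by (simp add: uses_space_def enc_def)
  have sol: "solves_IndSub_coP3 n (bb n + 2) ?init ?step ?endp ?out"
    unfolding solves_IndSub_coP3_def
  proof (intro allI impI)
    fix xs assume v: "valid_stream n xs"
    interpret vs n xs by (rule vs.intro[OF v])
    let ?r = "run_passes (astep n) (aend n) xs (bb n + 2) (ainit n)"
    have sr: "run_passes ?step ?endp xs (bb n + 2) ?init = enc n ?r \<and> Inv n ?r"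
      by (rule sim_run[where I="Inv n"]) (auto intro: dec_enc Inv_astep Inv_aend Inv_init)
    then have "?out (run_passes ?step ?endp xs (bb n + 2) ?init) = aout n ?r"
      using dec_enc by simp
    then show "case ?out (run_passes ?step ?endp xs (bb n + 2) ?init) of
           None \<Rightarrow> \<not> (\<exists>T. is_induced_coP3 n (set xs) T)
         | Some T \<Rightarrow> is_induced_coP3 n (set xs) T"
      using alg_correct by simp
  qed
  show ?thesis unfolding det_stream_alg_IndSub_coP3_def using us sol by blast
qed

theorem corollary26:
  shows "\<exists>(p :: nat \<Rightarrow> nat) (S :: nat \<Rightarrow> nat) (k :: nat).
           (\<lambda>n. real (p n)) \<in> O(\<lambda>n. ln (real n)) \<and>
           (\<lambda>n. real (S n)) \<in> O(\<lambda>n. real n * ln (real n) ^ k) \<and>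
           (\<forall>n. det_stream_alg_IndSub_coP3 n (p n) (S n))"
  apply (rule exI[of _ "\<lambda>n. bb n + 2"], rule exI[of _ SS], rule exI[of _ 1])
  using p_bigo S_bigo alg_exists by blast

end
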